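(* Let $(X,T),(Y,S)$ be topological dynamical systems and $f\in C(X\times Y)$. (a) If $(Y,S)$ has the specification property, then $\delta(f)\le\gamma(f)$. (b) If $(X,T)$ has the specification property, then $\delta(f)\ge\gamma(f)$.
   Context: A topological dynamical system $(X,T)$: $X$ compact metrizable, $T$ a homeomorphism. Write $\mathbb{A}_kf(x,y)=\frac1k\sum_{j=0}^{k-1}f(T^jx,S^jy)$. $\gamma(f)=\sup_{y\in Y}\inf_{x\in X}\limsup_{k\to\infty}\mathbb{A}_kf(x,y)$ and $\delta(f)=\limsup_{k\to\infty}\max_{y\in Y}\min_{x\in X}\mathbb{A}_kf(x,y)$. A specification in $X$ is $\xi=(x_i,[a_i,b_i])_{i=1}^n$ with integers $a_1\le b_1<a_2\le\dots<a_n\le b_n$; $D$-spaced if $a_{i+1}-b_i\ge D$; $x$ is an $\eta$-tracing if $d(T^jx,T^jx_i)<\eta$ for all $i$, $j\in[a_i,b_i]$ ($d$ a compatible metric). $(X,T)$ has the specification property if for each $\eta>0$ there is $D(\eta)\in\mathbb{N}$ such that every $D(\eta)$-spaced specification admits an $\eta$-tracing. *)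

theory Defs
  imports "HOL-Analysis.Analysis" "HOL-Library.Liminf_Limsup"
begin

definition tds :: "'a::metric_space set \<Rightarrow> ('a \<Rightarrow> 'a) \<Rightarrow> bool" where
  "tds X T \<longleftrightarrow> compact X \<and> (\<exists>g. homeomorphism X X T g)"

definition ziter :: "'a set \<Rightarrow> ('a \<Rightarrow> 'a) \<Rightarrow> int \<Rightarrow> 'a \<Rightarrow> 'a" where
  "ziter X T j x = (if 0 \<le> j then (T ^^ nat j) x else (inv_into X T ^^ nat (- j)) x)"

text \<open>Specification xi = (x_i,[a_i,b_i]) for i < n (0-based), with a_i \<le> b_i < a_(i+1);
  D-spaced if a_(i+1) - b_i \<ge> D; x is an eta-tracing if d(T^j x, T^j x_i) < eta for
  all i and j in [a_i,b_i].\<close>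
definition specification_property :: "'a::metric_space set \<Rightarrow> ('a \<Rightarrow> 'a) \<Rightarrow> bool" where
  "specification_property X T \<longleftrightarrow>
     (\<forall>\<eta>>0. \<exists>D::nat. \<forall>(n::nat) (xs::nat \<Rightarrow> 'a) (a::nat \<Rightarrow> int) (b::nat \<Rightarrow> int).
        ((\<forall>i<n. xs i \<in> X \<and> a i \<le> b i) \<and>
         (\<forall>i. Suc i < n \<longrightarrow> b i < a (Suc i) \<and> a (Suc i) - b i \<ge> int D))
        \<longrightarrow> (\<exists>x\<in>X. \<forall>i<n. \<forall>j\<in>{a i..b i}.
               dist (ziter X T j x) (ziter X T j (xs i)) < \<eta>))"

definition avg :: "('a \<Rightarrow> 'a) \<Rightarrow> ('b \<Rightarrow> 'b) \<Rightarrow> ('a \<times> 'b \<Rightarrow> real) \<Rightarrow> nat \<Rightarrow> 'a \<Rightarrow> 'b \<Rightarrow> real" where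
  "avg T S f k x y = (1 / real k) * (\<Sum>j<k. f ((T ^^ j) x, (S ^^ j) y))"

definition gamma :: "'a set \<Rightarrow> ('a \<Rightarrow> 'a) \<Rightarrow> 'b set \<Rightarrow> ('b \<Rightarrow> 'b) \<Rightarrow> ('a \<times> 'b \<Rightarrow> real) \<Rightarrow> ereal" where
  "gamma X T Y S f = (SUP y\<in>Y. INF x\<in>X. limsup (\<lambda>k. ereal (avg T S f k x y)))"

text \<open>delta(f) = limsup_k max_y min_x A_k f(x,y); max/min are attained (compactness,
  continuity), so they coincide with SUP/INF.\<close>
definition delta :: "'a set \<Rightarrow> ('a \<Rightarrow> 'a) \<Rightarrow> 'b set \<Rightarrow> ('b \<Rightarrow> 'b) \<Rightarrow> ('a \<times> 'b \<Rightarrow> real) \<Rightarrow> ereal" where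
  "delta X T Y S f = limsup (\<lambda>k. SUP y\<in>Y. INF x\<in>X. ereal (avg T S f k x y))"

end

theory Submission
  imports Defs
begin

lemma funpow_in: "T ` X \<subseteq> X \<Longrightarrow> x \<in> X \<Longrightarrow> (T^^j) x \<in> X"
  by (induction j) auto

lemma funpow_cont:
  assumes "continuous_on X T" "T ` X \<subseteq> X"
  shows "continuous_on X (T^^j)"
proof (induction j)
  case 0 then show ?case by (simp add: continuous_on_id)
next
  case (Suc j)
  have "continuous_on ((T^^j) ` X) T"
    using assms funpow_in[OF assms(2)] by (auto intro: continuous_on_subset)
  then have "continuous_on X (T \<circ> (T^^j))"
    using Suc by (intro continuous_on_compose) auto
  then show ?case by simp
qed

lemma inv_in:
  assumes "T ` X = X" "x \<in> X"
  shows "(inv_into X T ^^ a) x \<in> X"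
  using assms by (induction a) (auto intro: inv_into_into)

lemma inv_cancel:
  assumes "T ` X = X" "x \<in> X"
  shows "(T^^a) ((inv_into X T ^^ a) x) = x"
proof (induction a)
  case 0 then show ?case by simp
next
  case (Suc a)
  have "(inv_into X T ^^ a) x \<in> X" using inv_in[OF assms(1,2)] by simp
  then have e: "T (inv_into X T ((inv_into X T ^^ a) x)) = (inv_into X T ^^ a) x"
    using assms(1) by (intro f_inv_into_f) simp
  have "(T^^Suc a) ((inv_into X T ^^ Suc a) x) = (T^^a) (T (inv_into X T ((inv_into X T ^^ a) x)))"
    by (simp add: funpow_swap1)
  also have "\<dots> = x" using e Suc.IH by simp
  finally show ?case .
qed

lemma shift_inv:
  assumes "T ` X = X" "x \<in> X"
  shows "(T^^(i + a)) ((inv_into X T ^^ a) x) = (T^^i) x"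
  using inv_cancel[OF assms] by (simp add: funpow_add)

lemma shift_pow: "(T^^(i + a)) x = (T^^i) ((T^^a) x)"
  by (simp add: funpow_add)

lemma sum_split: "(\<Sum>j<m+(n::nat). h j) = (\<Sum>j<m. h j) + (\<Sum>i<n. h (m+i)::real)"
  by (induction n) (auto simp: add.assoc)

lemma spec_inf:
  assumes "tds X T" "specification_property X T" "\<eta> > 0"
  shows "\<exists>D::nat. \<forall>(xs::nat\<Rightarrow>'a::metric_space) (a::nat\<Rightarrow>nat) b.
     (\<forall>i. xs i \<in> X \<and> a i \<le> b i \<and> b i < a (Suc i) \<and> b i + D \<le> a (Suc i)) \<longrightarrow>
     (\<exists>x\<in>X. \<forall>i j. a i \<le> j \<and> j \<le> b i \<longrightarrow> dist ((T^^j) x) ((T^^j) (xs i)) \<le> \<eta>)"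
proof -
  obtain g where hom: "homeomorphism X X T g" using assms(1) unfolding tds_def by blast
  then have TX: "T ` X = X" and cT: "continuous_on X T" unfolding homeomorphism_def by auto
  have cX: "compact X" using assms(1) unfolding tds_def by blast
  obtain D :: nat where D: "\<forall>(n::nat) (xs::nat \<Rightarrow> 'a) (a::nat \<Rightarrow> int) (b::nat \<Rightarrow> int).
        ((\<forall>i<n. xs i \<in> X \<and> a i \<le> b i) \<and>
         (\<forall>i. Suc i < n \<longrightarrow> b i < a (Suc i) \<and> a (Suc i) - b i \<ge> int D))
        \<longrightarrow> (\<exists>x\<in>X. \<forall>i<n. \<forall>j\<in>{a i..b i}.
               dist (ziter X T j x) (ziter X T j (xs i)) < \<eta>)"
    using assms(2,3) unfolding specification_property_def by blast
  show ?thesis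
  proof (intro exI allI impI)
    fix xs :: "nat \<Rightarrow> 'a" and a b :: "nat \<Rightarrow> nat"
    assume H: "\<forall>i. xs i \<in> X \<and> a i \<le> b i \<and> b i < a (Suc i) \<and> b i + D \<le> a (Suc i)"
    have "\<exists>x\<in>X. \<forall>i<N. \<forall>j. a i \<le> j \<and> j \<le> b i \<longrightarrow> dist ((T^^j) x) ((T^^j) (xs i)) < \<eta>" for N
    proof -
      have hyp: "(\<forall>i<N. xs i \<in> X \<and> int (a i) \<le> int (b i)) \<and>
         (\<forall>i. Suc i < N \<longrightarrow> int (b i) < int (a (Suc i)) \<and> int (a (Suc i)) - int (b i) \<ge> int D)"
      proof (intro conjI allI impI)
        fix i assume "Suc i < N"
        have "b i + D \<le> a (Suc i)" "b i < a (Suc i)" using H by auto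
        then show "int (b i) < int (a (Suc i))" "int (a (Suc i)) - int (b i) \<ge> int D" by linarith+
      qed (use H in auto)
      have "\<exists>x\<in>X. \<forall>i<N. \<forall>j\<in>{int (a i)..int (b i)}. dist (ziter X T j x) (ziter X T j (xs i)) < \<eta>"
        using D[rule_format, OF hyp] .
      then obtain x where x: "x \<in> X" "\<forall>i<N. \<forall>j\<in>{int (a i)..int (b i)}. dist (ziter X T j x) (ziter X T j (xs i)) < \<eta>"
        by blast
      have "dist ((T^^j) x) ((T^^j) (xs i)) < \<eta>" if "i < N" "a i \<le> j" "j \<le> b i" for i j
        using x(2)[rule_format, OF that(1), of "int j"] that by (simp add: ziter_def)
      then show ?thesis using x(1) by blast
    qed
    then obtain z where z: "\<And>N. z N \<in> X" "\<And>N i j. i < N \<Longrightarrow> a i \<le> j \<Longrightarrow> j \<le> b i \<Longrightarrow> dist ((T^^j) (z N)) ((T^^j) (xs i)) < \<eta>"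
      by metis
    obtain x r where x: "x \<in> X" "strict_mono r" "(z \<circ> r) \<longlonglongrightarrow> x"
      using compact_imp_seq_compact[OF cX] z(1) unfolding seq_compact_def by metis
    show "\<exists>x\<in>X. \<forall>i j. a i \<le> j \<and> j \<le> b i \<longrightarrow> dist ((T^^j) x) ((T^^j) (xs i)) \<le> \<eta>"
    proof (intro bexI[OF _ x(1)] allI impI)
      fix i j assume ij: "a i \<le> j \<and> j \<le> b i"
      have "((\<lambda>n. (T^^j) ((z \<circ> r) n)) \<longlonglongrightarrow> (T^^j) x)"
        by (rule continuous_on_tendsto_compose[OF funpow_cont[OF cT] x(3) x(1)]) (use TX z(1) in auto)
      then have lim: "((\<lambda>n. dist ((T^^j) ((z \<circ> r) n)) ((T^^j) (xs i))) \<longlonglongrightarrow> dist ((T^^j) x) ((T^^j) (xs i)))"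
        by (intro tendsto_dist tendsto_const)
      have ev: "eventually (\<lambda>n. dist ((T^^j) ((z \<circ> r) n)) ((T^^j) (xs i)) \<le> \<eta>) sequentially"
      proof (rule eventually_sequentiallyI[of "Suc i"])
        fix n assume "Suc i \<le> n"
        then have "i < r n" using seq_suble[OF x(2), of n] by linarith
        then show "dist ((T^^j) ((z \<circ> r) n)) ((T^^j) (xs i)) \<le> \<eta>"
          using z(2)[of i "r n" j] ij by fastforce
      qed
      show "dist ((T^^j) x) ((T^^j) (xs i)) \<le> \<eta>"
        using tendsto_le[OF trivial_limit_sequentially tendsto_const lim ev] .
    qed
  qed
qed

lemma sys_basics:
  fixes X :: "'a::metric_space set" and T :: "'a \<Rightarrow> 'a"
    and Y :: "'b::metric_space set" and S :: "'b \<Rightarrow> 'b"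
    and f :: "'a \<times> 'b \<Rightarrow> real"
  assumes tX: "tds X T" and tY: "tds Y S" and ne: "X \<noteq> {}" "Y \<noteq> {}"
    and fc: "continuous_on (X \<times> Y) f"
  shows "T ` X = X" "S ` Y = Y" "\<exists>M. 0 \<le> M \<and> (\<forall>p\<in>X\<times>Y. \<bar>f p\<bar> \<le> M)"
    "\<forall>e>0. \<exists>d>0. \<forall>x\<in>X. \<forall>x'\<in>X. \<forall>y\<in>Y. dist x' x < d \<longrightarrow> \<bar>f (x', y) - f (x, y)\<bar> < e"
    "\<forall>e>0. \<exists>d>0. \<forall>x\<in>X. \<forall>y\<in>Y. \<forall>y'\<in>Y. dist y' y < d \<longrightarrow> \<bar>f (x, y') - f (x, y)\<bar> < e"
proof -
  obtain gT where "homeomorphism X X T gT" using tX unfolding tds_def by blast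
  then show TX: "T ` X = X" unfolding homeomorphism_def by auto
  obtain gS where "homeomorphism Y Y S gS" using tY unfolding tds_def by blast
  then show SY: "S ` Y = Y" unfolding homeomorphism_def by auto
  have cXY: "compact (X \<times> Y)" using tX tY unfolding tds_def by (simp add: compact_Times)
  have "bounded (f ` (X \<times> Y))" using compact_continuous_image[OF fc cXY] by (rule compact_imp_bounded)
  then obtain M where M: "\<forall>p\<in>X \<times> Y. \<bar>f p\<bar> \<le> M" unfolding bounded_iff by auto
  obtain x0 y0 where "x0 \<in> X" "y0 \<in> Y" using ne by blast
  then have "0 \<le> M" using M abs_ge_zero[of "f (x0,y0)"] by force
  then show "\<exists>M. 0 \<le> M \<and> (\<forall>p\<in>X\<times>Y. \<bar>f p\<bar> \<le> M)" using M by blast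
  have uc: "uniformly_continuous_on (X \<times> Y) f" using compact_uniformly_continuous[OF fc cXY] .
  show "\<forall>e>0. \<exists>d>0. \<forall>x\<in>X. \<forall>x'\<in>X. \<forall>y\<in>Y. dist x' x < d \<longrightarrow> \<bar>f (x', y) - f (x, y)\<bar> < e"
  proof (intro allI impI)
    fix e :: real assume e: "e > 0"
    obtain d where d: "d > 0" "\<forall>p\<in>X\<times>Y. \<forall>p'\<in>X\<times>Y. dist p' p < d \<longrightarrow> dist (f p') (f p) < e"
      using uc[unfolded uniformly_continuous_on_def, rule_format, OF e] by blast
    show "\<exists>d>0. \<forall>x\<in>X. \<forall>x'\<in>X. \<forall>y\<in>Y. dist x' x < d \<longrightarrow> \<bar>f (x', y) - f (x, y)\<bar> < e"
    proof (intro exI[of _ d] conjI ballI impI)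
      fix x x' y assume h: "x \<in> X" "x' \<in> X" "y \<in> Y" "dist x' x < d"
      have "dist (x', y) (x, y) = dist x' x" by (simp add: dist_Pair_Pair)
      then show "\<bar>f (x', y) - f (x, y)\<bar> < e"
        using d(2)[rule_format, of "(x,y)" "(x',y)"] h by (simp add: dist_real_def)
    qed (use d in auto)
  qed
  show "\<forall>e>0. \<exists>d>0. \<forall>x\<in>X. \<forall>y\<in>Y. \<forall>y'\<in>Y. dist y' y < d \<longrightarrow> \<bar>f (x, y') - f (x, y)\<bar> < e"
  proof (intro allI impI)
    fix e :: real assume e: "e > 0"
    obtain d where d: "d > 0" "\<forall>p\<in>X\<times>Y. \<forall>p'\<in>X\<times>Y. dist p' p < d \<longrightarrow> dist (f p') (f p) < e"
      using uc[unfolded uniformly_continuous_on_def, rule_format, OF e] by blast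
    show "\<exists>d>0. \<forall>x\<in>X. \<forall>y\<in>Y. \<forall>y'\<in>Y. dist y' y < d \<longrightarrow> \<bar>f (x, y') - f (x, y)\<bar> < e"
    proof (intro exI[of _ d] conjI ballI impI)
      fix x y y' assume h: "x \<in> X" "y \<in> Y" "y' \<in> Y" "dist y' y < d"
      have "dist (x, y') (x, y) = dist y' y" by (simp add: dist_Pair_Pair)
      then show "\<bar>f (x, y') - f (x, y)\<bar> < e"
        using d(2)[rule_format, of "(x,y)" "(x,y')"] h by (simp add: dist_real_def)
    qed (use d in auto)
  qed
qed

lemma part_b:
  fixes X :: "'a::metric_space set" and T :: "'a \<Rightarrow> 'a"
    and Y :: "'b::metric_space set" and S :: "'b \<Rightarrow> 'b"
    and f :: "'a \<times> 'b \<Rightarrow> real"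
  assumes tX: "tds X T" and tY: "tds Y S" and ne: "X \<noteq> {}" "Y \<noteq> {}"
    and fc: "continuous_on (X \<times> Y) f" and sp: "specification_property X T"
  shows "gamma X T Y S f \<le> delta X T Y S f"
proof -
  note st = sys_basics[OF tX tY ne fc]
  have TX: "T ` X = X" and SY: "S ` Y = Y" using st by auto
  obtain M where M0: "0 \<le> M" and M: "\<And>p. p \<in> X \<times> Y \<Longrightarrow> \<bar>f p\<bar> \<le> M" using st(3) by blast
  show ?thesis unfolding gamma_def
  proof (rule SUP_least)
    fix y assume y: "y \<in> Y"
    show "(INF x\<in>X. limsup (\<lambda>k. ereal (avg T S f k x y))) \<le> delta X T Y S f"
    proof (rule dense_ge)
      fix c assume c: "delta X T Y S f < c"
      show "(INF x\<in>X. limsup (\<lambda>k. ereal (avg T S f k x y))) \<le> c"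
      proof (cases c)
        case PInf then show ?thesis by simp
      next
        case MInf then show ?thesis using c by simp
      next
        case (real cr)
        obtain c0 where c0: "delta X T Y S f < ereal c0" "ereal c0 < c" using ereal_dense2[OF c] by blast
        have c0cr: "c0 < cr" using c0(2) real by simp
        define e where "e = (cr - c0)/4"
        have e0: "e > 0" using c0cr by (simp add: e_def)
        have "eventually (\<lambda>k. (SUP y\<in>Y. INF x\<in>X. ereal (avg T S f k x y)) < ereal c0) sequentially"
          using Limsup_lessD[OF c0(1)[unfolded delta_def]] .
        then obtain K where K: "\<And>k. k \<ge> K \<Longrightarrow> (SUP y\<in>Y. INF x\<in>X. ereal (avg T S f k x y)) < ereal c0"
          unfolding eventually_sequentially by blast
        have pick: "\<exists>x. x \<in> X \<and> avg T S f k x y' < c0" if "k \<ge> K" "y' \<in> Y" for k y'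
        proof -
          have "(INF x\<in>X. ereal (avg T S f k x y')) < ereal c0"
            using order.strict_trans1[OF SUP_upper[OF that(2)] K[OF that(1)]] .
          then show ?thesis by (auto simp add: INF_less_iff)
        qed
        obtain d where d: "d > 0" "\<And>x x' y. x\<in>X \<Longrightarrow> x'\<in>X \<Longrightarrow> y\<in>Y \<Longrightarrow> dist x' x < d \<Longrightarrow> \<bar>f (x', y) - f (x, y)\<bar> < e"
          using st(4)[rule_format, OF e0] by blast
        obtain D :: nat where D: "\<forall>(xs::nat\<Rightarrow>'a) (a::nat\<Rightarrow>nat) b. (\<forall>i. xs i \<in> X \<and> a i \<le> b i \<and> b i < a (Suc i) \<and> b i + D \<le> a (Suc i)) \<longrightarrow> (\<exists>x\<in>X. \<forall>i j. a i \<le> j \<and> j \<le> b i \<longrightarrow> dist ((T^^j) x) ((T^^j) (xs i)) \<le> d/2)"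
          using spec_inf[OF tX sp, of "d/2"] d(1) by auto
        define c1 where "c1 = c0 + 2*e"
        define M' where "M' = M + \<bar>c1\<bar>"
        have M'0: "0 \<le> M'" using M0 by (simp add: M'_def)
        define L where "L = max (max K 1) (nat \<lceil>D * M' / e\<rceil>)"
        have L: "L \<ge> K" "L \<ge> 1" unfolding L_def by auto
        have L3: "D * M' \<le> e * L"
        proof -
          have "D * M' / e \<le> real (nat \<lceil>D * M' / e\<rceil>)" by (rule real_nat_ceiling_ge)
          also have "\<dots> \<le> real L" unfolding L_def by simp
          finally show ?thesis using e0 by (simp add: divide_le_eq mult.commute)
        qed
        define P where "P = L + D"
        have "\<forall>i. \<exists>x. x \<in> X \<and> avg T S f L x ((S^^(i*P)) y) < c0"
        proof
          fix i
          have "(S^^(i*P)) y \<in> Y" using funpow_in[of S Y y] SY y by simp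
          then show "\<exists>x. x \<in> X \<and> avg T S f L x ((S^^(i*P)) y) < c0" using pick[OF L(1)] by simp
        qed
        from choice[OF this] obtain xi where xi: "\<And>i. xi i \<in> X" "\<And>i. avg T S f L (xi i) ((S^^(i*P)) y) < c0"
          by blast
        define xs where "xs i = (inv_into X T ^^ (i*P)) (xi i)" for i
        have xsX: "xs i \<in> X" for i using inv_in[OF TX xi(1)] by (simp add: xs_def)
        have hypD: "xs i \<in> X \<and> i*P \<le> i*P + (L-1) \<and> i*P + (L-1) < Suc i * P \<and> i*P + (L-1) + D \<le> Suc i * P" for i
          using xsX L(2) by (auto simp: P_def)
        obtain x where x: "x \<in> X" and tr: "\<And>i j. i*P \<le> j \<Longrightarrow> j \<le> i*P + (L - 1) \<Longrightarrow> dist ((T^^j) x) ((T^^j) (xs i)) \<le> d/2"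
          using D[rule_format, of xs "\<lambda>i. i*P" "\<lambda>i. i*P + (L-1)", OF hypD] by blast
        define g where "g j = f ((T^^j) x, (S^^j) y) - c1" for j
        have inXY: "((T^^j) x', (S^^j) y) \<in> X \<times> Y" if "x' \<in> X" for j x'
          using funpow_in[of T X x' j] funpow_in[of S Y y j] TX SY that y by simp
        have gM: "g j \<le> M'" for j
          using M[OF inXY[OF x, of j]] by (simp add: g_def M'_def)
        have blk: "(\<Sum>i<L. g (q*P + i)) \<le> 0" for q
        proof -
          have each: "g (q*P + i) \<le> f ((T^^i) (xi q), (S^^i) ((S^^(q*P)) y)) - c0 - e" if "i < L" for i
          proof -
            have e1: "(T^^(q*P+i)) (xs q) = (T^^i) (xi q)"
              using shift_inv[OF TX xi(1)[of q], where i=i and a="q*P"] unfolding xs_def by (simp add: add.commute)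
            have e2: "(S^^(q*P+i)) y = (S^^i) ((S^^(q*P)) y)"
              using shift_pow[where T=S and i=i and a="q*P" and x=y] by (simp add: add.commute)
            have dd: "dist ((T^^(q*P+i)) x) ((T^^(q*P+i)) (xs q)) < d"
            proof -
              have "q*P + i \<le> q*P + (L - 1)" using that by simp
              then have "dist ((T^^(q*P+i)) x) ((T^^(q*P+i)) (xs q)) \<le> d/2" using tr[of q "q*P+i"] by simp
              then show ?thesis using d(1) by simp
            qed
            have "\<bar>f ((T^^(q*P+i)) x, (S^^(q*P+i)) y) - f ((T^^(q*P+i)) (xs q), (S^^(q*P+i)) y)\<bar> < e"
              using d(2)[OF _ _ _ dd] inXY[OF x, of "q*P+i"] inXY[OF xsX, of "q*P+i"] by simp
            then show ?thesis unfolding g_def c1_def e1 e2 by linarith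
          qed
          have A: "(\<Sum>i<L. g (q*P+i)) \<le> (\<Sum>i<L. f ((T^^i) (xi q), (S^^i) ((S^^(q*P)) y)) - c0 - e)"
            by (rule sum_mono) (use each in auto)
          have B: "(\<Sum>i<L. f ((T^^i) (xi q), (S^^i) ((S^^(q*P)) y)) - c0 - e)
              = (\<Sum>i<L. f ((T^^i) (xi q), (S^^i) ((S^^(q*P)) y))) - real L * c0 - real L * e"
            by (simp add: sum_subtractf)
          have C: "(\<Sum>i<L. f ((T^^i) (xi q), (S^^i) ((S^^(q*P)) y))) = real L * avg T S f L (xi q) ((S^^(q*P)) y)"
            using L(2) by (simp add: avg_def)
          have D': "real L * avg T S f L (xi q) ((S^^(q*P)) y) < real L * c0"
            using xi(2)[of q] L(2) by simp
          have "0 \<le> real L * e" using e0 by simp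
          then show ?thesis using A B C D' by linarith
        qed
        have pref: "(\<Sum>j<q*P. g j) \<le> real q * (D * M')" for q
        proof (induction q)
          case 0 show ?case by simp
        next
          case (Suc q)
          have eqP: "Suc q * P = q*P + L + D" by (simp add: P_def)
          have s1: "(\<Sum>j<q*P+L+D. g j) = (\<Sum>j<q*P+L. g j) + (\<Sum>i<D. g (q*P+L+i))" by (rule sum_split)
          have s2: "(\<Sum>j<q*P+L. g j) = (\<Sum>j<q*P. g j) + (\<Sum>i<L. g (q*P+i))" by (rule sum_split)
          have "(\<Sum>j<Suc q * P. g j) = (\<Sum>j<q*P. g j) + (\<Sum>i<L. g (q*P+i)) + (\<Sum>i<D. g (q*P+L+i))"
            unfolding eqP s1 s2 ..
          moreover have "(\<Sum>i<D. g (q*P+L+i)) \<le> (\<Sum>i<D. M')" by (intro sum_mono gM)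
          then have "(\<Sum>i<D. g (q*P+L+i)) \<le> real D * M'" by simp
          moreover have "real (Suc q) * (D*M') = real q * (D*M') + D*M'" by (simp add: algebra_simps)
          ultimately show ?case using Suc.IH blk[of q] by linarith
        qed
        have P0: "P > 0" using L(2) by (simp add: P_def)
        have main: "(\<Sum>j<k. g j) \<le> e * k + P * M'" for k
        proof -
          define q where "q = k div P"
          define r where "r = k mod P"
          have kq: "k = q*P + r" by (simp add: q_def r_def)
          have rP: "r < P" using P0 by (simp add: r_def)
          have "(\<Sum>j<q*P+r. g j) = (\<Sum>j<q*P. g j) + (\<Sum>i<r. g (q*P+i))" by (rule sum_split)
          then have s1: "(\<Sum>j<k. g j) = (\<Sum>j<q*P. g j) + (\<Sum>i<r. g (q*P+i))" using kq by simp
          have "(\<Sum>i<r. g (q*P+i)) \<le> (\<Sum>i<r. M')" by (intro sum_mono gM)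
          then have s2: "(\<Sum>i<r. g (q*P+i)) \<le> real r * M'" by simp
          have s3: "real r * M' \<le> real P * M'" using rP M'0 by (simp add: mult_right_mono)
          have "q * L \<le> k" using kq by (simp add: P_def algebra_simps)
          then have "real q * real L \<le> real k" by (metis of_nat_le_iff of_nat_mult)
          then have "e * (real q * real L) \<le> e * real k" using e0 by simp
          moreover have "real q * (D * M') \<le> real q * (e * L)" using L3 by (simp add: mult_left_mono)
          ultimately have s4: "real q * (D * M') \<le> e * real k" by (simp add: algebra_simps)
          show ?thesis using s1 s2 s3 s4 pref[of q] by linarith
        qed
        have ev: "eventually (\<lambda>k. ereal (avg T S f k x y) \<le> ereal cr) sequentially"
        proof (rule eventually_sequentiallyI[of "max 1 (nat \<lceil>P * M' / e\<rceil>)"])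
          fix k assume k: "max 1 (nat \<lceil>P * M' / e\<rceil>) \<le> k"
          then have k0: "k > 0" by simp
          have "P * M' / e \<le> real (nat \<lceil>P * M' / e\<rceil>)" by (rule real_nat_ceiling_ge)
          also have "\<dots> \<le> real k" using k by simp
          finally have "P * M' \<le> e * k" using e0 by (simp add: divide_le_eq mult.commute)
          have sg: "(\<Sum>j<k. g j) = (\<Sum>j<k. f ((T^^j) x, (S^^j) y)) - real k * c1"
            by (simp add: g_def sum_subtractf)
          have "(\<Sum>j<k. f ((T^^j) x, (S^^j) y)) \<le> real k * cr"
          proof -
            have h1: "real k * c1 = real k * c0 + 2 * (e * real k)" by (simp add: c1_def algebra_simps)
            have h2: "real k * cr = real k * c0 + 4 * (e * real k)" by (simp add: e_def field_simps)
            show ?thesis using sg main[of k] \<open>P * M' \<le> e * k\<close> h1 h2 by (simp add: mult.commute)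
          qed
          then have "avg T S f k x y \<le> cr" using k0 by (simp add: avg_def field_simps)
          then show "ereal (avg T S f k x y) \<le> ereal cr" by simp
        qed
        have "limsup (\<lambda>k. ereal (avg T S f k x y)) \<le> ereal cr" by (rule Limsup_bounded[OF ev])
        then show ?thesis using INF_lower[OF x, of "\<lambda>x. limsup (\<lambda>k. ereal (avg T S f k x y))"] real
          by simp
      qed
    qed
  qed
qed


lemma part_a:
  fixes X :: "'a::metric_space set" and T :: "'a \<Rightarrow> 'a"
    and Y :: "'b::metric_space set" and S :: "'b \<Rightarrow> 'b"
    and f :: "'a \<times> 'b \<Rightarrow> real"
  assumes tX: "tds X T" and tY: "tds Y S" and ne: "X \<noteq> {}" "Y \<noteq> {}"
    and fc: "continuous_on (X \<times> Y) f" and sp: "specification_property Y S"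
  shows "delta X T Y S f \<le> gamma X T Y S f"
proof -
  note st = sys_basics[OF tX tY ne fc]
  have TX: "T ` X = X" and SY: "S ` Y = Y" using st by auto
  obtain M where M0: "0 \<le> M" and M: "\<And>p. p \<in> X \<times> Y \<Longrightarrow> \<bar>f p\<bar> \<le> M" using st(3) by blast
  show ?thesis
  proof (rule dense_le)
    fix c assume c: "c < delta X T Y S f"
    show "c \<le> gamma X T Y S f"
    proof (cases c)
      case PInf then show ?thesis using c by simp
    next
      case MInf then show ?thesis by simp
    next
      case (real cr)
      obtain c0 where c0: "c < ereal c0" "ereal c0 < delta X T Y S f" using ereal_dense2[OF c] by blast
      have c0cr: "cr < c0" using c0(1) real by simp
      define e where "e = (c0 - cr)/4"
      have e0: "e > 0" using c0cr by (simp add: e_def)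
      define u where "u = (\<lambda>k. SUP y\<in>Y. INF x\<in>X. ereal (avg T S f k x y))"
      have freq: "\<exists>k\<ge>N. ereal c0 < u k" for N
      proof (rule ccontr)
        assume "\<not> (\<exists>k\<ge>N. ereal c0 < u k)"
        then have "\<forall>k\<ge>N. u k \<le> ereal c0" by (auto simp: not_less)
        then have "eventually (\<lambda>k. u k \<le> ereal c0) sequentially" by (auto simp: eventually_sequentially)
        then have "limsup u \<le> ereal c0" by (rule Limsup_bounded)
        with c0(2) show False unfolding delta_def u_def by simp
      qed
      have pk: "\<exists>k. \<exists>y'. k \<ge> N \<and> y' \<in> Y \<and> (\<forall>x\<in>X. c0 < avg T S f k x y')" for N
      proof -
        obtain k where k: "k \<ge> N" "ereal c0 < u k" using freq by blast
        then obtain y' where y': "y' \<in> Y" "ereal c0 < (INF x\<in>X. ereal (avg T S f k x y'))"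
          unfolding u_def by (auto simp: less_SUP_iff)
        have "\<forall>x\<in>X. c0 < avg T S f k x y'"
        proof
          fix x assume "x \<in> X"
          from less_INF_D[OF y'(2) this] show "c0 < avg T S f k x y'" by simp
        qed
        then show ?thesis using k y' by blast
      qed
      obtain kk where "\<forall>N. \<exists>y'. kk N \<ge> N \<and> y' \<in> Y \<and> (\<forall>x\<in>X. c0 < avg T S f (kk N) x y')"
      proof -
        have "\<forall>N. \<exists>k. \<exists>y'. k \<ge> N \<and> y' \<in> Y \<and> (\<forall>x\<in>X. c0 < avg T S f k x y')" using pk by blast
        from choice[OF this] show ?thesis using that by blast
      qed
      from choice[OF this] obtain yy where kkyy: "\<And>N. kk N \<ge> N" "\<And>N. yy N \<in> Y"
        "\<And>N x. x \<in> X \<Longrightarrow> c0 < avg T S f (kk N) x (yy N)"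
        by blast
      obtain d where d: "d > 0" "\<And>x y y'. x\<in>X \<Longrightarrow> y\<in>Y \<Longrightarrow> y'\<in>Y \<Longrightarrow> dist y' y < d \<Longrightarrow> \<bar>f (x, y') - f (x, y)\<bar> < e"
        using st(5)[rule_format, OF e0] by blast
      obtain D :: nat where D: "\<forall>(xs::nat\<Rightarrow>'b) (a::nat\<Rightarrow>nat) b. (\<forall>i. xs i \<in> Y \<and> a i \<le> b i \<and> b i < a (Suc i) \<and> b i + D \<le> a (Suc i)) \<longrightarrow> (\<exists>x\<in>Y. \<forall>i j. a i \<le> j \<and> j \<le> b i \<longrightarrow> dist ((S^^j) x) ((S^^j) (xs i)) \<le> d/2)"
        using spec_inf[OF tY sp, of "d/2"] d(1) by auto
      define c1 where "c1 = c0 - e"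
      define M' where "M' = M + \<bar>c1\<bar>"
      have M'0: "0 \<le> M'" using M0 by (simp add: M'_def)
      define a :: "nat \<Rightarrow> nat" where "a = rec_nat 0 (\<lambda>n an. an + kk (Suc n * Suc an) + D)"
      define len where "len n = kk (Suc n * Suc (a n))" for n
      have aS: "a (Suc n) = a n + len n + D" for n by (simp add: a_def len_def)
      have lenb: "len n \<ge> Suc n * Suc (a n)" for n unfolding len_def by (rule kkyy(1))
      have len1: "len n \<ge> 1" for n using lenb[of n] by (metis One_nat_def le_trans mult_Suc_right not_less_eq_eq zero_less_Suc le_add1 Suc_le_eq)
      define yn where "yn n = yy (Suc n * Suc (a n))" for n
      have ynY: "yn n \<in> Y" for n unfolding yn_def by (rule kkyy(2))
      have ynav: "c0 < avg T S f (len n) x (yn n)" if "x \<in> X" for n x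
        unfolding yn_def len_def by (rule kkyy(3)[OF that])
      define xs where "xs n = (inv_into Y S ^^ a n) (yn n)" for n
      have xsY: "xs n \<in> Y" for n using inv_in[OF SY ynY] by (simp add: xs_def)
      have hypD: "xs i \<in> Y \<and> a i \<le> a i + (len i - 1) \<and> a i + (len i - 1) < a (Suc i) \<and> a i + (len i - 1) + D \<le> a (Suc i)" for i
        using xsY len1[of i] aS[of i] by auto
      obtain y where y: "y \<in> Y" and tr: "\<And>i j. a i \<le> j \<Longrightarrow> j \<le> a i + (len i - 1) \<Longrightarrow> dist ((S^^j) y) ((S^^j) (xs i)) \<le> d/2"
        using D[rule_format, of xs "a" "\<lambda>i. a i + (len i - 1)", OF hypD] by blast
      have inXY: "((T^^j) x, (S^^j) y') \<in> X \<times> Y" if "x \<in> X" "y' \<in> Y" for j x y'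
        using funpow_in[of T X x j] funpow_in[of S Y y' j] TX SY that by simp
      define kn where "kn n = a n + len n" for n
      have smk: "strict_mono kn"
        unfolding strict_mono_Suc_iff
      proof
        fix n
        have "len (Suc n) \<ge> 1" by (rule len1)
        then show "kn n < kn (Suc n)" unfolding kn_def using aS[of n] by simp
      qed
      have "ereal cr \<le> (INF x\<in>X. limsup (\<lambda>k. ereal (avg T S f k x y)))"
      proof (rule INF_greatest)
        fix x assume x: "x \<in> X"
        define g where "g j = f ((T^^j) x, (S^^j) y) - c1" for j
        have gM: "- M' \<le> g j" for j
          using M[OF inXY[OF x y, of j]] by (simp add: g_def M'_def)
        have blk: "0 \<le> (\<Sum>i<len n. g (a n + i))" for n
        proof -
          have TxX: "(T^^(a n)) x \<in> X" using funpow_in[of T X x "a n"] TX x by simp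
          have each: "f ((T^^i) ((T^^(a n)) x), (S^^i) (yn n)) - c0 \<le> g (a n + i)" if "i < len n" for i
          proof -
            have e1: "(S^^(a n+i)) (xs n) = (S^^i) (yn n)"
              using shift_inv[OF SY ynY[of n], where i=i and a="a n"] unfolding xs_def by (simp add: add.commute)
            have e2: "(T^^(a n+i)) x = (T^^i) ((T^^(a n)) x)"
              using shift_pow[where T=T and i=i and a="a n" and x=x] by (simp add: add.commute)
            have dd: "dist ((S^^(a n+i)) y) ((S^^(a n+i)) (xs n)) < d"
            proof -
              have "a n + i \<le> a n + (len n - 1)" using that by simp
              then have "dist ((S^^(a n+i)) y) ((S^^(a n+i)) (xs n)) \<le> d/2" using tr[of n "a n+i"] by simp
              then show ?thesis using d(1) by simp
            qed
            have "\<bar>f ((T^^(a n+i)) x, (S^^(a n+i)) y) - f ((T^^(a n+i)) x, (S^^(a n+i)) (xs n))\<bar> < e"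
              using d(2)[OF _ _ _ dd] inXY[OF x y, of "a n+i"] inXY[OF x xsY, of "a n+i"] by simp
            then show ?thesis unfolding g_def c1_def e1 e2 by linarith
          qed
          have A: "(\<Sum>i<len n. f ((T^^i) ((T^^(a n)) x), (S^^i) (yn n)) - c0) \<le> (\<Sum>i<len n. g (a n+i))"
            by (rule sum_mono) (use each in auto)
          have B: "(\<Sum>i<len n. f ((T^^i) ((T^^(a n)) x), (S^^i) (yn n)) - c0)
              = (\<Sum>i<len n. f ((T^^i) ((T^^(a n)) x), (S^^i) (yn n))) - real (len n) * c0"
            by (simp add: sum_subtractf)
          have C: "(\<Sum>i<len n. f ((T^^i) ((T^^(a n)) x), (S^^i) (yn n))) = real (len n) * avg T S f (len n) ((T^^(a n)) x) (yn n)"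
            using len1[of n] by (simp add: avg_def)
          have D': "real (len n) * c0 < real (len n) * avg T S f (len n) ((T^^(a n)) x) (yn n)"
            using ynav[OF TxX, of n] len1[of n] by simp
          show ?thesis using A B C D' by linarith
        qed
        have pre: "- (real (a n) * M') \<le> (\<Sum>j<kn n. g j)" for n
        proof -
          have s1: "(\<Sum>j<kn n. g j) = (\<Sum>j<a n. g j) + (\<Sum>i<len n. g (a n + i))"
            unfolding kn_def by (rule sum_split)
          have "(\<Sum>j<a n. - M') \<le> (\<Sum>j<a n. g j)" by (intro sum_mono gM)
          then have "- (real (a n) * M') \<le> (\<Sum>j<a n. g j)" by simp
          then show ?thesis using s1 blk[of n] by linarith
        qed
        have ev: "eventually (\<lambda>n. ereal cr \<le> ((\<lambda>k. ereal (avg T S f k x y)) \<circ> kn) n) sequentially"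
        proof (rule eventually_sequentiallyI[of "nat \<lceil>M' / e\<rceil>"])
          fix n assume n: "nat \<lceil>M' / e\<rceil> \<le> n"
          have "M' / e \<le> real (nat \<lceil>M' / e\<rceil>)" by (rule real_nat_ceiling_ge)
          also have "\<dots> \<le> real (Suc n)" using n by (simp only: of_nat_le_iff le_SucI)
          finally have Me: "M' \<le> e * real (Suc n)" using e0 by (simp add: divide_le_eq mult.commute)
          have kpos: "kn n > 0" using len1[of n] by (simp add: kn_def)
          have "Suc n * a n \<le> kn n" using lenb[of n] unfolding kn_def
            by (metis le_add2 le_trans mult_Suc_right mult_le_mono2 le_add1 add.commute)
          then have ak: "real (Suc n) * real (a n) \<le> real (kn n)" by (metis of_nat_le_iff of_nat_mult)
          have "real (a n) * M' \<le> real (a n) * (e * real (Suc n))" using Me by (simp add: mult_left_mono)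
          also have "\<dots> = e * (real (Suc n) * real (a n))" by (simp add: algebra_simps)
          also have "\<dots> \<le> e * real (kn n)" using ak e0 by simp
          finally have aM: "real (a n) * M' \<le> e * real (kn n)" .
          have sg: "(\<Sum>j<kn n. g j) = (\<Sum>j<kn n. f ((T^^j) x, (S^^j) y)) - real (kn n) * c1"
            by (simp add: g_def sum_subtractf)
          have "real (kn n) * cr \<le> (\<Sum>j<kn n. f ((T^^j) x, (S^^j) y))"
          proof -
            have h1: "real (kn n) * c1 = real (kn n) * cr + 3 * (e * real (kn n))" by (simp add: c1_def e_def field_simps)
            have "0 \<le> e * real (kn n)" using e0 by simp
            then show ?thesis using sg pre[of n] aM h1 by linarith
          qed
          then have "cr \<le> avg T S f (kn n) x y" using kpos by (simp add: avg_def field_simps)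
          then show "ereal cr \<le> ((\<lambda>k. ereal (avg T S f k x y)) \<circ> kn) n" by simp
        qed
        have "ereal cr \<le> limsup ((\<lambda>k. ereal (avg T S f k x y)) \<circ> kn)"
          by (rule le_Limsup[OF sequentially_bot ev])
        also have "\<dots> \<le> limsup (\<lambda>k. ereal (avg T S f k x y))" by (rule limsup_subseq_mono[OF smk])
        finally show "ereal cr \<le> limsup (\<lambda>k. ereal (avg T S f k x y))" .
      qed
      also have "\<dots> \<le> gamma X T Y S f" unfolding gamma_def by (rule SUP_upper[OF y])
      finally show ?thesis using real by simp
    qed
  qed
qed

theorem theorem2p13:
  fixes X :: "'a::metric_space set" and T :: "'a \<Rightarrow> 'a"
    and Y :: "'b::metric_space set" and S :: "'b \<Rightarrow> 'b"
    and f :: "'a \<times> 'b \<Rightarrow> real"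
  assumes "tds X T" and "tds Y S" and "X \<noteq> {}" and "Y \<noteq> {}"
    and "continuous_on (X \<times> Y) f"
  shows "(specification_property Y S \<longrightarrow> delta X T Y S f \<le> gamma X T Y S f)
       \<and> (specification_property X T \<longrightarrow> delta X T Y S f \<ge> gamma X T Y S f)"
  using part_a[OF assms] part_b[OF assms] by blast


end
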